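(* For $k=3$ and $d\in[6.74,7.5]$, the equation $\Psi_d(x)=x$ has a unique solution in $[\frac38,\frac12]$.
   Context: For $k=3$: $\hat\Psi(x)=\frac{1-2x^{2}}{1-x^{2}}$, $\dot\Psi(v)=\frac{1-v^{d-1}}{2-v^{d-1}}$, $\Psi_d=\dot\Psi\circ\hat\Psi$ ($d$ real). *)

theory Defs
  imports Complex_Main
begin

definition Psi_hat :: "real \<Rightarrow> real" where
  "Psi_hat x = (1 - 2 * x\<^sup>2) / (1 - x\<^sup>2)"

definition Psi_dot :: "real \<Rightarrow> real \<Rightarrow> real" where
  "Psi_dot d v = (1 - v powr (d - 1)) / (2 - v powr (d - 1))"

definition Psi :: "real \<Rightarrow> real \<Rightarrow> real" where
  "Psi d = Psi_dot d \<circ> Psi_hat"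

end

theory Submission
  imports Defs
begin

lemma hat_bounds:
  fixes x :: real assumes "3/8 \<le> x" "x \<le> 1/2"
  shows "0 < Psi_hat x" "Psi_hat x < 1"
proof -
  have "x\<^sup>2 \<le> (1/2)\<^sup>2" "(3/8)\<^sup>2 \<le> x\<^sup>2" using assms by (intro power_mono; simp)+
  hence x2: "x\<^sup>2 \<le> 1/4" "x\<^sup>2 \<ge> 9/64" by (simp_all add: power2_eq_square)
  show "0 < Psi_hat x" "Psi_hat x < 1" unfolding Psi_hat_def using x2 by (auto simp: field_simps)
qed

lemma hat_anti:
  fixes a x :: real assumes "0 \<le> a" "a \<le> x" "x \<le> 1/2"
  shows "Psi_hat x \<le> Psi_hat a"
proof -
  have "a\<^sup>2 \<le> x\<^sup>2" using assms by (simp add: power_mono)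
  moreover have "x\<^sup>2 \<le> (1/2)\<^sup>2" using assms by (intro power_mono) auto
  hence "x\<^sup>2 \<le> 1/4" by (simp add: power2_eq_square)
  ultimately show ?thesis unfolding Psi_hat_def by (auto simp: field_simps)
qed

lemma piece:
  fixes a b x t :: real
  assumes "3/8 \<le> a" "a \<le> x" "x \<le> b" "b \<le> 1/2" "57/10 \<le> t"
    and num: "(Psi_hat a)^57 < ((1-2*b)/(1-b))^10"
  shows "Psi_hat x powr t < (1-2*x)/(1-x)"
proof -
  have va: "0 < Psi_hat a" "Psi_hat a < 1" using hat_bounds assms by auto
  have vx: "0 < Psi_hat x" "Psi_hat x < 1" using hat_bounds assms by auto
  have "Psi_hat x powr t \<le> Psi_hat x powr (57/10)"
    using vx assms by (intro powr_mono') auto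
  also have "\<dots> \<le> Psi_hat a powr (57/10)"
    using vx assms hat_anti[of a x] by (intro powr_mono2) auto
  also have "\<dots> < (1-2*b)/(1-b)"
  proof (rule power_less_imp_less_base)
    have "(Psi_hat a powr (57/10))^10 = Psi_hat a powr 57"
      using va by (simp add: powr_power)
    also have "\<dots> = Psi_hat a ^ 57" using va by (simp add: powr_realpow)
    finally show "(Psi_hat a powr (57/10))^10 < ((1-2*b)/(1-b))^10" using num by simp
    show "0 \<le> (1-2*b)/(1-b)" using assms by auto
  qed
  also have "\<dots> \<le> (1-2*x)/(1-x)" using assms by (auto simp: field_simps)
  finally show ?thesis .
qed

lemma checks:
  "(Psi_hat (3/8))^57 < ((1-2*(77/200))/(1-(77/200)))^10"
  "(Psi_hat (77/200))^57 < ((1-2*(79/200))/(1-(79/200)))^10"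
  "(Psi_hat (79/200))^57 < ((1-2*(81/200))/(1-(81/200)))^10"
  "(Psi_hat (81/200))^57 < ((1-2*(413/1000))/(1-(413/1000)))^10"
  "(Psi_hat (413/1000))^57 < ((1-2*(21/50))/(1-(21/50)))^10"
  by (simp_all add: Psi_hat_def power2_eq_square power_divide divide_less_eq less_divide_eq)


lemma fix_iff:
  fixes d x :: real assumes "3/8 \<le> x" "x \<le> 1/2" "1 < d"
  shows "Psi d x = x \<longleftrightarrow> Psi_hat x powr (d-1) = (1-2*x)/(1-x)"
    and "Psi d x > x \<longleftrightarrow> Psi_hat x powr (d-1) < (1-2*x)/(1-x)"
proof -
  define w where "w = Psi_hat x powr (d-1)"
  have v: "0 < Psi_hat x" "Psi_hat x < 1" using hat_bounds assms by auto
  have w0: "0 < w" using v by (simp add: w_def)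
  have "w \<le> Psi_hat x powr 0" unfolding w_def using v assms by (intro powr_mono') auto
  hence w1: "w \<le> 1" using v by simp
  have P: "Psi d x = (1-w)/(2-w)" by (simp add: Psi_def Psi_dot_def w_def)
  have x1: "1 - x > 0" using assms by auto
  show "Psi d x = x \<longleftrightarrow> Psi_hat x powr (d-1) = (1-2*x)/(1-x)"
    unfolding P w_def[symmetric] using w1 x1 by (auto simp: field_simps)
  show "Psi d x > x \<longleftrightarrow> Psi_hat x powr (d-1) < (1-2*x)/(1-x)"
    unfolding P w_def[symmetric] using w1 x1 by (auto simp: field_simps)
qed

lemma poly_pos:
  fixes x t :: real assumes "21/50 \<le> x" "x < 1/2" "t \<le> 13/2"
  shows "2*t*x*(1-2*x)*(1-x) < (1-x\<^sup>2)*(1-2*x\<^sup>2)"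
proof -
  have a: "(x - 21/50)*(23*(x+21/50)-12) \<ge> 0" using assms by (intro mult_nonneg_nonneg) auto
  have a': "(x - 21/50)*(23*(x+21/50)-12) = 23*x^2 - 12*x + 1 - 43/2500"
    by (simp add: field_simps power2_eq_square)
  have b: "x*x*(1-2*x) \<ge> 0" using assms by auto
  have b': "x*x*(1-2*x) = x^2 - 2*x^3" by (simp add: algebra_simps power2_eq_square power3_eq_cube)
  have c: "t*(x*(1-2*x)) \<le> 13/2*(x*(1-2*x))" using assms by (intro mult_right_mono) auto
  have c': "t*(x*(1-2*x)) = t*x - 2*(t*x^2)" "13/2*(x*(1-2*x)) = 13/2*x - 13*x^2"
    by (simp_all add: field_simps power2_eq_square)
  have e: "(1-x\<^sup>2)*(1-2*x\<^sup>2) - 2*t*x*(1-2*x)*(1-x) = (1-x)*(1 + x - 2*x^2 - 2*x^3 - 2*(t*x) + 4*(t*x^2))"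
    by (simp add: algebra_simps power2_eq_square power3_eq_cube)
  have "0 < 1 + x - 2*x^2 - 2*x^3 - 2*(t*x) + 4*(t*x^2)"
    using a a' b b' c c' by linarith
  moreover have "0 < 1 - x" using assms by auto
  ultimately have "0 < (1-x)*(1 + x - 2*x^2 - 2*x^3 - 2*(t*x) + 4*(t*x^2))" by simp
  thus ?thesis using e by linarith
qed

lemma h_deriv:
  fixes x t :: real assumes "21/50 \<le> x" "x < 1/2" "0 \<le> t" "t \<le> 13/2"
  shows "((\<lambda>x. t*ln(1-2*x\<^sup>2) - t*ln(1-x\<^sup>2) - ln(1-2*x) + ln(1-x)) has_real_derivative
     (t*(-4*x)/(1-2*x\<^sup>2) - t*(-2*x)/(1-x\<^sup>2) - (-2)/(1-2*x) + (-1)/(1-x))) (at x)"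
proof -
  have "x\<^sup>2 < (1/2)\<^sup>2" using assms by (intro power_strict_mono) auto
  hence "x\<^sup>2 < 1/4" by (simp add: power2_eq_square)
  hence p: "0 < 1-2*x\<^sup>2" "0 < 1-x\<^sup>2" "0 < 1-2*x" "0 < 1-x" using assms by auto
  show ?thesis
  proof -
    have d1: "((\<lambda>x. ln(1-2*x\<^sup>2)) has_real_derivative (-4*x)/(1-2*x\<^sup>2)) (at x)"
      using p by (auto intro!: derivative_eq_intros simp: power2_eq_square)
    have d2: "((\<lambda>x. ln(1-x\<^sup>2)) has_real_derivative (-2*x)/(1-x\<^sup>2)) (at x)"
      using p by (auto intro!: derivative_eq_intros simp: power2_eq_square)
    have d3: "((\<lambda>x. ln(1-2*x)) has_real_derivative (-2)/(1-2*x)) (at x)"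
      using p by (auto intro!: derivative_eq_intros)
    have d4: "((\<lambda>x. ln(1-x)) has_real_derivative (-1)/(1-x)) (at x)"
      using p by (auto intro!: derivative_eq_intros)
    have "((\<lambda>x. t*ln(1-2*x\<^sup>2) - t*ln(1-x\<^sup>2) - ln(1-2*x) + ln(1-x)) has_real_derivative
     (t*((-4*x)/(1-2*x\<^sup>2)) - t*((-2*x)/(1-x\<^sup>2)) - (-2)/(1-2*x) + (-1)/(1-x))) (at x)"
      by (intro DERIV_add DERIV_diff DERIV_cmult d1 d2 d3 d4)
    thus ?thesis by simp
  qed
qed

lemma h_deriv_pos:
  fixes x t :: real assumes "21/50 \<le> x" "x < 1/2" "0 \<le> t" "t \<le> 13/2"
  shows "0 < t*(-4*x)/(1-2*x\<^sup>2) - t*(-2*x)/(1-x\<^sup>2) - (-2)/(1-2*x) + (-1)/(1-x)"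
proof -
  have "x\<^sup>2 < (1/2)\<^sup>2" using assms by (intro power_strict_mono) auto
  hence "x\<^sup>2 < 1/4" by (simp add: power2_eq_square)
  hence p: "0 < 1-2*x\<^sup>2" "0 < 1-x\<^sup>2" "0 < 1-2*x" "0 < 1-x" using assms by auto
  have e1: "t*(-4*x)/(1-2*x\<^sup>2) - t*(-2*x)/(1-x\<^sup>2) = -(2*t*x/((1-x\<^sup>2)*(1-2*x\<^sup>2)))"
    using p by (simp add: field_simps)
  have e2: "- (-2)/(1-2*x) + (-1)/(1-x) = 1/((1-2*x)*(1-x))"
    using p by (simp add: field_simps)
  have A: "0 < (1-2*x)*(1-x)" "0 < (1-x\<^sup>2)*(1-2*x\<^sup>2)" using p by auto
  have "2*t*x/((1-x\<^sup>2)*(1-2*x\<^sup>2)) < 1/((1-2*x)*(1-x))"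
    using poly_pos[OF assms(1,2,4)] A by (simp add: divide_less_eq less_divide_eq mult.assoc mult.commute mult.left_commute)
  thus ?thesis using e1 e2 by linarith
qed


lemma root_iff_h:
  fixes d x :: real assumes "3/8 \<le> x" "x < 1/2" "1 < d"
  shows "Psi d x = x \<longleftrightarrow> (d-1)*ln(1-2*x\<^sup>2) - (d-1)*ln(1-x\<^sup>2) - ln(1-2*x) + ln(1-x) = 0"
proof -
  have v: "0 < Psi_hat x" using hat_bounds assms by auto
  have "x\<^sup>2 < (1/2)\<^sup>2" using assms by (intro power_strict_mono) auto
  hence "x\<^sup>2 < 1/4" by (simp add: power2_eq_square)
  hence p: "0 < 1-2*x\<^sup>2" "0 < 1-x\<^sup>2" "0 < 1-2*x" "0 < 1-x" using assms by auto
  have "Psi d x = x \<longleftrightarrow> Psi_hat x powr (d-1) = (1-2*x)/(1-x)"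
    using fix_iff assms by auto
  also have "\<dots> \<longleftrightarrow> ln (Psi_hat x powr (d-1)) = ln ((1-2*x)/(1-x))"
    using v p by (subst ln_inj_iff) auto
  also have "\<dots> \<longleftrightarrow> (d-1)*(ln(1-2*x\<^sup>2) - ln(1-x\<^sup>2)) = ln(1-2*x) - ln(1-x)"
    using p by (simp add: Psi_hat_def ln_divide_pos)
  finally show ?thesis by (simp add: algebra_simps)
qed

lemma hat_cont: "continuous_on {3/8..1/2} Psi_hat"
proof -
  have "\<forall>x\<in>{3/8..1/2::real}. 1 - x\<^sup>2 \<noteq> 0"
  proof
    fix x :: real assume "x \<in> {3/8..1/2}"
    hence "x\<^sup>2 \<le> (1/2)\<^sup>2" by (intro power_mono) auto
    thus "1 - x\<^sup>2 \<noteq> 0" by (simp add: power2_eq_square)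
  qed
  thus ?thesis unfolding Psi_hat_def by (intro continuous_intros) auto
qed

theorem lemma4p1:
  fixes d :: real
  assumes "6.74 \<le> d" and "d \<le> 7.5"
  shows "\<exists>!x. x \<in> {3/8..1/2} \<and> Psi d x = x"
proof -
  have d1: "1 < d" using assms by simp
  have t1: "57/10 \<le> d - 1" "d - 1 \<le> 13/2" using assms by simp_all
  define h where "h x = (d-1)*ln(1-2*x\<^sup>2) - (d-1)*ln(1-x\<^sup>2) - ln(1-2*x) + ln(1-x)" for x :: real
  have noroot: "Psi d x > x" if "3/8 \<le> x" "x \<le> 21/50" for x
  proof -
    have "Psi_hat x powr (d-1) < (1-2*x)/(1-x)"
    proof -
      consider "x \<le> 77/200" | "77/200 \<le> x" "x \<le> 79/200" | "79/200 \<le> x" "x \<le> 81/200"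
        | "81/200 \<le> x" "x \<le> 413/1000" | "413/1000 \<le> x" by linarith
      thus ?thesis
      proof cases
        case 1 thus ?thesis using that t1 checks(1) by (intro piece[of "3/8" x "77/200"]) auto
      next
        case 2 thus ?thesis using that t1 checks(2) by (intro piece[of "77/200" x "79/200"]) auto
      next
        case 3 thus ?thesis using that t1 checks(3) by (intro piece[of "79/200" x "81/200"]) auto
      next
        case 4 thus ?thesis using that t1 checks(4) by (intro piece[of "81/200" x "413/1000"]) auto
      next
        case 5 thus ?thesis using that t1 checks(5) by (intro piece[of "413/1000" x "21/50"]) auto
      qed
    qed
    thus ?thesis using fix_iff(2)[of x d] that d1 by auto
  qed
  have half: "Psi d (1/2) \<le> 1/2"
  proof -
    have "0 < Psi_hat (1/2) powr (d-1)" using hat_bounds[of "1/2"] by simp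
    thus ?thesis using fix_iff[of "1/2" d] d1 by auto
  qed
  have loc: "21/50 < x \<and> x < 1/2 \<and> h x = 0" if "x \<in> {3/8..1/2}" "Psi d x = x" for x
  proof -
    have "21/50 < x" using noroot[of x] that by force
    moreover have "x \<noteq> 1/2"
    proof
      assume "x = 1/2"
      have "0 < Psi_hat (1/2) powr (d-1)" using hat_bounds[of "1/2"] by simp
      thus False using fix_iff(1)[of "1/2" d] d1 that \<open>x = 1/2\<close> by auto
    qed
    ultimately show ?thesis using that root_iff_h[of x d] d1 unfolding h_def by auto
  qed
  have mono: "h x1 < h x2" if "21/50 < x1" "x1 < x2" "x2 < 1/2" for x1 x2
  proof (rule DERIV_pos_imp_increasing[OF that(2)])
    fix x assume "x1 \<le> x" "x \<le> x2"
    hence x: "21/50 \<le> x" "x < 1/2" using that by auto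
    show "\<exists>y. (h has_real_derivative y) (at x) \<and> 0 < y"
      using h_deriv[OF x, of "d-1"] h_deriv_pos[OF x, of "d-1"] t1 unfolding h_def[abs_def]
      by auto
  qed
  have ex: "\<exists>x. x \<in> {3/8..1/2} \<and> Psi d x = x"
  proof -
    have c: "continuous_on {3/8..1/2} (\<lambda>x. Psi d x - x)"
    proof -
      have pos: "\<forall>x\<in>{3/8..1/2::real}. Psi_hat x \<noteq> 0" using hat_bounds by fastforce
      have "\<forall>x\<in>{3/8..1/2::real}. 2 - Psi_hat x powr (d-1) \<noteq> 0"
      proof
        fix x :: real assume x: "x \<in> {3/8..1/2}"
        have "Psi_hat x powr (d-1) \<le> Psi_hat x powr 0"
          using hat_bounds[of x] x d1 by (intro powr_mono') auto
        thus "2 - Psi_hat x powr (d-1) \<noteq> 0" using hat_bounds[of x] x by auto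
      qed
      thus ?thesis unfolding Psi_def Psi_dot_def o_def using pos
        by (intro continuous_intros hat_cont) auto
    qed
    have "Psi d (3/8) - 3/8 \<ge> 0" using noroot[of "3/8"] by simp
    moreover have "Psi d (1/2) - 1/2 \<le> 0" using half by simp
    ultimately obtain x where "3/8 \<le> x" "x \<le> 1/2" "Psi d x - x = 0"
      using IVT2'[of "\<lambda>x. Psi d x - x" "1/2" 0 "3/8"] c by auto
    thus ?thesis by auto
  qed
  show ?thesis
  proof (rule ex_ex1I[OF ex])
    fix x y assume x: "x \<in> {3/8..1/2} \<and> Psi d x = x" and y: "y \<in> {3/8..1/2} \<and> Psi d y = y"
    have lx: "21/50 < x" "x < 1/2" "h x = 0" using loc x by auto
    have ly: "21/50 < y" "y < 1/2" "h y = 0" using loc y by auto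
    show "x = y"
    proof (rule ccontr)
      assume "x \<noteq> y"
      hence "x < y \<or> y < x" by auto
      thus False using mono lx ly by force
    qed
  qed
qed

end
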